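(* Let $\{x^k\}$ be an infinite sequence generated by the MPG algorithm described in the context (i.e., the algorithm never stops), and suppose that for each $j=1,\ldots,m$ the gradient $\nabla G_j$ is Lipschitz continuous with constant $L_j>0$. Then there exists $c>0$ such that $$\theta_\alpha(x^k)\ge c\big(F_{j_k^*}(x^{k+1})-F_{j_k^*}(x^k)\big)\quad\text{for all } k\in\mathbb{N},$$ where $j_k^*\in\arg\max_{j=1,\ldots,m}\nabla G_j(x^k)^\top d^k$ is the index chosen in Step 3 of the algorithm.
   Context: Let $F:\mathbb{R}^n\to(\mathbb{R}\cup\{+\infty\})^m$, $F=(F_1,\ldots,F_m)$, with $F_j=G_j+H_j$ for $j=1,\ldots,m$, where: (i) each $G_j:\mathbb{R}^n\to\mathbb{R}$ is continuously differentiable and convex; (ii) each $H_j:\mathbb{R}^n\to\mathbb{R}\cup\{+\infty\}$ is proper, convex and continuous on its domain; (iii) $\mathrm{dom}(F):=\{x: F_j(x)<+\infty\ \forall j\}$ is nonempty and closed. For $u,v\in\mathbb{R}^m$, $u\preceq v$ means $u_j\le v_j$ for all $j$. For $x\in\mathrm{dom}(F)$ and $\alpha>0$ define $\psi_x(u):=\max_{j=1,\ldots,m}\big(\nabla G_j(x)^\top(u-x)+H_j(u)-H_j(x)\big)$, $p_\alpha(x):=\arg\min_{u\in\mathbb{R}^n}\psi_x(u)+\frac{1}{2\alpha}\|u-x\|^2$ (unique minimizer), and $\theta_\alpha(x):=\psi_x(p_\alpha(x))+\frac{1}{2\alpha}\|p_\alpha(x)-x\|^2$. MPG algorithm. Step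 0: choose $x^0\in\mathrm{dom}(F)$, $\alpha>0$, $\gamma\in(0,2/\alpha)$, $0<\tau_1<\tau_2<1$; set $k=0$. Step 1: compute $p^k:=p_\alpha(x^k)$ and $\theta_\alpha(x^k)$. Step 2: if $\theta_\alpha(x^k)=0$, stop. Step 3: set $d^k:=p^k-x^k$, take $j_k^*\in\arg\max_{j}\nabla G_j(x^k)^\top d^k$, set $t=1$. Step 3.1: if $G_{j_k^*}(x^k+td^k)\le G_{j_k^*}(x^k)+t\nabla G_{j_k^*}(x^k)^\top d^k+t\frac{\gamma}{2}\|d^k\|^2$, go to Step 3.2; otherwise replace $t$ by some value in $[\tau_1 t,\tau_2 t]$ and repeat Step 3.1. Step 3.2: if $F(x^k+td^k)\preceq F(x^k)$, set $t_k=t$ and go to Step 4. Step 3.3: replace $t$ by some value in $[\tau_1 t,\tau_2 t]$; if $G_j(x^k+td^k)\le G_j(x^k)+t\nabla G_j(x^k)^\top d^k+t\frac{\gamma}{2}\|d^k\|^2$ for all $j=1,\ldots,m$, set $t_k=t$ and go to Step 4; otherwise repeat Step 3.3. Step 4: $x^{k+1}:=x^k+t_kd^k$, $k\leftarrow k+1$, go to Step 1. *)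

theory Defs
  imports "HOL-Analysis.Analysis" "HOL-Library.Extended_Real"
begin

text \<open>Objectives are indexed by j in {1..m}. G j is the smooth part with gradient gradG j,
  H j the extended-real-valued nonsmooth part.\<close>

definition domE :: "('a \<Rightarrow> ereal) \<Rightarrow> 'a set" where
  "domE h = {x. h x < \<infinity>}"

text \<open>proper, convex, continuous on its domain (extended-valued convexity = convex domain and
  convexity of the finite restriction to the domain)\<close>
definition proper_convex_cont :: "('a::real_normed_vector \<Rightarrow> ereal) \<Rightarrow> bool" where
  "proper_convex_cont h \<longleftrightarrow> domE h \<noteq> {} \<and> (\<forall>x. h x \<noteq> -\<infinity>) \<and>
     convex (domE h) \<and> convex_on (domE h) (\<lambda>x. real_of_ereal (h x)) \<and>
     continuous_on (domE h) (\<lambda>x. real_of_ereal (h x))"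

definition Fobj :: "(nat \<Rightarrow> 'a \<Rightarrow> real) \<Rightarrow> (nat \<Rightarrow> 'a \<Rightarrow> ereal) \<Rightarrow> nat \<Rightarrow> 'a \<Rightarrow> ereal" where
  "Fobj G H j x = ereal (G j x) + H j x"

definition domF :: "(nat \<Rightarrow> 'a \<Rightarrow> real) \<Rightarrow> (nat \<Rightarrow> 'a \<Rightarrow> ereal) \<Rightarrow> nat \<Rightarrow> 'a set" where
  "domF G H m = {x. \<forall>j\<in>{1..m}. Fobj G H j x < \<infinity>}"

definition psi :: "(nat \<Rightarrow> 'a \<Rightarrow> 'a::real_inner) \<Rightarrow> (nat \<Rightarrow> 'a \<Rightarrow> ereal) \<Rightarrow> nat \<Rightarrow> 'a \<Rightarrow> 'a \<Rightarrow> ereal" where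
  "psi gradG H m x u = Max ((\<lambda>j. ereal (gradG j x \<bullet> (u - x)) + H j u - H j x) ` {1..m})"

definition p_alpha :: "(nat \<Rightarrow> 'a \<Rightarrow> 'a::real_inner) \<Rightarrow> (nat \<Rightarrow> 'a \<Rightarrow> ereal) \<Rightarrow> nat \<Rightarrow> real \<Rightarrow> 'a \<Rightarrow> 'a" where
  "p_alpha gradG H m \<alpha> x =
     (ARG_MIN (\<lambda>u. psi gradG H m x u + ereal (norm (u - x) ^ 2 / (2 * \<alpha>))) u. True)"

definition theta_alpha :: "(nat \<Rightarrow> 'a \<Rightarrow> 'a::real_inner) \<Rightarrow> (nat \<Rightarrow> 'a \<Rightarrow> ereal) \<Rightarrow> nat \<Rightarrow> real \<Rightarrow> 'a \<Rightarrow> ereal" where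
  "theta_alpha gradG H m \<alpha> x =
     psi gradG H m x (p_alpha gradG H m \<alpha> x) + ereal (norm (p_alpha gradG H m \<alpha> x - x) ^ 2 / (2 * \<alpha>))"

definition armijo :: "(nat \<Rightarrow> 'a \<Rightarrow> real) \<Rightarrow> (nat \<Rightarrow> 'a \<Rightarrow> 'a::real_inner) \<Rightarrow> real \<Rightarrow> nat \<Rightarrow> 'a \<Rightarrow> 'a \<Rightarrow> real \<Rightarrow> bool" where
  "armijo G gradG \<gamma> j x d t \<longleftrightarrow>
     G j (x + t *\<^sub>R d) \<le> G j x + t * (gradG j x \<bullet> d) + t * (\<gamma> / 2) * norm d ^ 2"

text \<open>Backtracking loop: test P t; if it holds stop with t, otherwise replace t by some
  value in [tau1 t, tau2 t] and repeat. bt P tau1 tau2 t t' means the loop started at t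
  can terminate with output t'.\<close>
inductive bt :: "(real \<Rightarrow> bool) \<Rightarrow> real \<Rightarrow> real \<Rightarrow> real \<Rightarrow> real \<Rightarrow> bool"
  for P :: "real \<Rightarrow> bool" and \<tau>1 \<tau>2 :: real where
  stop: "P t \<Longrightarrow> bt P \<tau>1 \<tau>2 t t"
| shrink: "\<not> P t \<Longrightarrow> \<tau>1 * t \<le> s \<Longrightarrow> s \<le> \<tau>2 * t \<Longrightarrow> bt P \<tau>1 \<tau>2 s t' \<Longrightarrow> bt P \<tau>1 \<tau>2 t t'"

definition mpg_linesearch ::
  "(nat \<Rightarrow> 'a \<Rightarrow> real) \<Rightarrow> (nat \<Rightarrow> 'a \<Rightarrow> 'a::real_inner) \<Rightarrow> (nat \<Rightarrow> 'a \<Rightarrow> ereal) \<Rightarrow> nat \<Rightarrow>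
   real \<Rightarrow> real \<Rightarrow> real \<Rightarrow> 'a \<Rightarrow> 'a \<Rightarrow> nat \<Rightarrow> real \<Rightarrow> bool" where
  "mpg_linesearch G gradG H m \<gamma> \<tau>1 \<tau>2 xk d j tk \<longleftrightarrow>
     (\<exists>t. bt (armijo G gradG \<gamma> j xk d) \<tau>1 \<tau>2 1 t \<and>
       (((\<forall>i\<in>{1..m}. Fobj G H i (xk + t *\<^sub>R d) \<le> Fobj G H i xk) \<and> tk = t) \<or>
        (\<not> (\<forall>i\<in>{1..m}. Fobj G H i (xk + t *\<^sub>R d) \<le> Fobj G H i xk) \<and>
         (\<exists>s. \<tau>1 * t \<le> s \<and> s \<le> \<tau>2 * t \<and>
            bt (\<lambda>r. \<forall>i\<in>{1..m}. armijo G gradG \<gamma> i xk d r) \<tau>1 \<tau>2 s tk))))"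

end

theory Submission
  imports Defs
begin

lemma bt_bound:
  assumes "bt P \<tau>1 \<tau>2 s t'" "0 < \<tau>1" "\<tau>2 \<le> 1" "0 < s" "0 < b"
    "\<And>r. 0 < r \<Longrightarrow> r \<le> b \<Longrightarrow> P r"
  shows "P t' \<and> t' \<le> s \<and> min s (\<tau>1 * b) \<le> t'"
  using assms(1,4)
proof (induction rule: bt.induct)
  case (stop t)
  then show ?case by simp
next
  case (shrink t s t')
  have tb: "t > b" using shrink(1) shrink(6) assms(6) by force
  have "\<tau>1 * t > 0" using assms(2) shrink(6) by simp
  then have s0: "s > 0" using shrink(2) by linarith
  have IH: "P t' \<and> t' \<le> s \<and> min s (\<tau>1 * b) \<le> t'" using shrink(5) s0 by blast
  have "\<tau>2 * t \<le> t" using assms(3) shrink(6) by (simp add: mult_le_cancel_right1)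
  moreover have "\<tau>1 * b \<le> \<tau>1 * t" using tb assms(2) by simp
  ultimately show ?case using IH shrink(2,3) by (auto simp: min_def split: if_splits)
qed

lemma descent:
  fixes g :: "'a::real_inner \<Rightarrow> real"
  assumes der: "\<And>y. (g has_derivative (\<lambda>h. gr y \<bullet> h)) (at y)"
    and lip: "\<And>y z. norm (gr y - gr z) \<le> L * norm (y - z)"
    and r: "0 \<le> r" and L: "L \<ge> 0"
  shows "g (x + r *\<^sub>R d) \<le> g x + r * (gr x \<bullet> d) + L * r^2 / 2 * norm d ^ 2"
proof -
  define h where "h s = g (x + s *\<^sub>R d) - g x - s * (gr x \<bullet> d) - L * s^2 / 2 * norm d ^ 2" for s
  have d1: "((\<lambda>s. g (x + s *\<^sub>R d)) has_real_derivative (gr (x + s *\<^sub>R d) \<bullet> d)) (at s)" for s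
  proof -
    have "((\<lambda>s. x + s *\<^sub>R d) has_derivative (\<lambda>h. h *\<^sub>R d)) (at s)"
      by (auto intro!: derivative_eq_intros)
    from has_derivative_compose[OF this der]
    have "((\<lambda>s. g (x + s *\<^sub>R d)) has_derivative (\<lambda>h. gr (x + s *\<^sub>R d) \<bullet> (h *\<^sub>R d))) (at s)" .
    moreover have "(\<lambda>h. gr (x + s *\<^sub>R d) \<bullet> (h *\<^sub>R d)) = (*) (gr (x + s *\<^sub>R d) \<bullet> d)"
      by (auto simp: inner_scaleR_right)
    ultimately show ?thesis unfolding has_field_derivative_def by simp
  qed
  have dh: "(h has_real_derivative (gr (x + s *\<^sub>R d) \<bullet> d - gr x \<bullet> d - L * s * norm d ^ 2)) (at s)" for s
    unfolding h_def
    by (rule derivative_eq_intros d1 refl | simp)+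
  have "h r \<le> h 0"
  proof (rule DERIV_nonpos_imp_nonincreasing[OF r])
    fix s assume s: "0 \<le> s" "s \<le> r"
    have "gr (x + s *\<^sub>R d) \<bullet> d - gr x \<bullet> d = (gr (x + s *\<^sub>R d) - gr x) \<bullet> d"
      by (simp add: inner_diff_left)
    also have "\<dots> \<le> norm (gr (x + s *\<^sub>R d) - gr x) * norm d" by (rule norm_cauchy_schwarz)
    also have "\<dots> \<le> (L * norm (s *\<^sub>R d)) * norm d"
      using lip[of "x + s *\<^sub>R d" x] by (intro mult_right_mono) auto
    also have "\<dots> = L * s * norm d ^ 2" using s by (simp add: power2_eq_square)
    finally show "\<exists>y. (h has_real_derivative y) (at s) \<and> y \<le> 0" using dh by force
  qed
  then show ?thesis unfolding h_def by simp
qed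


lemma Max_cont:
  fixes f :: "nat \<Rightarrow> 'a::topological_space \<Rightarrow> real"
  assumes "finite A" "A \<noteq> {}" "\<And>j. j \<in> A \<Longrightarrow> continuous_on S (f j)"
  shows "continuous_on S (\<lambda>u. Max ((\<lambda>j. f j u) ` A))"
  using assms
proof (induction A rule: finite_ne_induct)
  case (singleton x)
  then show ?case by simp
next
  case (insert x F)
  have "continuous_on S (\<lambda>u. max (f x u) (Max ((\<lambda>j. f j u) ` F)))"
    using insert by (intro continuous_on_max) auto
  then show ?case using insert by simp
qed

locale mpg =
  fixes G :: "nat \<Rightarrow> 'a::euclidean_space \<Rightarrow> real"
    and gradG :: "nat \<Rightarrow> 'a \<Rightarrow> 'a"
    and H :: "nat \<Rightarrow> 'a \<Rightarrow> ereal"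
    and m :: nat and \<alpha> :: real
  assumes m_pos: "m \<ge> 1"
    and H_prop: "\<And>j. j \<in> {1..m} \<Longrightarrow> proper_convex_cont (H j)"
    and dom_closed: "closed (domF G H m)"
    and alpha_pos: "\<alpha> > 0"
begin

abbreviation "D \<equiv> domF G H m"
definition "hr j u = real_of_ereal (H j u)"
definition "T x j u = gradG j x \<bullet> (u - x) + hr j u - hr j x"
definition "q x u = Max ((\<lambda>j. T x j u) ` {1..m})"
definition "f x u = q x u + norm (u - x) ^ 2 / (2 * \<alpha>)"

lemma H_ninf: "j \<in> {1..m} \<Longrightarrow> H j u \<noteq> -\<infinity>"
  using H_prop unfolding proper_convex_cont_def by blast

lemma D_iff: "u \<in> D \<longleftrightarrow> (\<forall>j\<in>{1..m}. H j u < \<infinity>)"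
  unfolding domF_def Fobj_def by auto

lemma H_fin: assumes "j \<in> {1..m}" "u \<in> D" shows "H j u = ereal (hr j u)"
proof -
  have "H j u < \<infinity>" "H j u \<noteq> -\<infinity>" using D_iff H_ninf assms by auto
  then show ?thesis unfolding hr_def by (cases "H j u") auto
qed

lemma D_eq: "D = (\<Inter>j\<in>{1..m}. domE (H j))"
  using D_iff unfolding domE_def by auto

lemma D_sub: "j \<in> {1..m} \<Longrightarrow> D \<subseteq> domE (H j)"
  using D_eq by auto

lemma D_convex: "convex D"
  unfolding D_eq using H_prop unfolding proper_convex_cont_def by (intro convex_INT) auto

lemma D_seg: assumes "x \<in> D" "u \<in> D" "0 \<le> s" "s \<le> 1" shows "x + s *\<^sub>R (u - x) \<in> D"
proof -
  have e: "x + s *\<^sub>R (u - x) = (1 - s) *\<^sub>R x + s *\<^sub>R u" by (simp add: algebra_simps)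
  show ?thesis unfolding e by (rule convexD[OF D_convex assms(1,2)]) (use assms in auto)
qed

lemma hr_convex: "j \<in> {1..m} \<Longrightarrow> convex_on D (hr j)"
  unfolding hr_def
  by (rule convex_on_subset[OF _ D_sub D_convex]) (use H_prop[of j] in \<open>auto simp: proper_convex_cont_def\<close>)

lemma hr_cont: "j \<in> {1..m} \<Longrightarrow> continuous_on D (hr j)"
  unfolding hr_def
  by (rule continuous_on_subset[OF _ D_sub]) (use H_prop[of j] in \<open>auto simp: proper_convex_cont_def\<close>)

lemma T_cont: "j \<in> {1..m} \<Longrightarrow> continuous_on D (T x j)"
  unfolding T_def using hr_cont by (intro continuous_intros) auto

lemma q_cont: "continuous_on D (q x)"
  unfolding q_def using m_pos by (intro Max_cont T_cont) auto

lemma f_cont: "continuous_on D (f x)"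
  unfolding f_def using alpha_pos by (intro continuous_intros q_cont) auto

lemma q_ge: "j \<in> {1..m} \<Longrightarrow> T x j u \<le> q x u"
  unfolding q_def by (intro Max_ge) auto

lemma q_self: "q x x = 0"
proof -
  have "(\<lambda>j. T x j x) ` {1..m} = {0}" using m_pos unfolding T_def by auto
  then show ?thesis unfolding q_def by simp
qed

lemma psi_in: assumes "x \<in> D" "u \<in> D" shows "psi gradG H m x u = ereal (q x u)"
proof -
  have "(\<lambda>j. ereal (gradG j x \<bullet> (u - x)) + H j u - H j x) ` {1..m} = ereal ` ((\<lambda>j. T x j u) ` {1..m})"
    using H_fin assms unfolding T_def by (auto simp: image_iff)
  moreover have "mono ereal" by (auto simp: mono_def)
  ultimately show ?thesis unfolding psi_def q_def using m_pos
    by (simp add: mono_Max_commute)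
qed

lemma psi_out: assumes "x \<in> D" "u \<notin> D" shows "psi gradG H m x u = \<infinity>"
proof -
  obtain j where j: "j \<in> {1..m}" "H j u = \<infinity>" using assms(2) D_iff by auto
  have "ereal (gradG j x \<bullet> (u - x)) + H j u - H j x = \<infinity>"
    using j H_fin[OF j(1) assms(1)] by simp
  moreover have "ereal (gradG j x \<bullet> (u - x)) + H j u - H j x \<in> (\<lambda>j. ereal (gradG j x \<bullet> (u - x)) + H j u - H j x) ` {1..m}"
    using j by blast
  ultimately have "\<infinity> \<le> psi gradG H m x u" unfolding psi_def
    by (metis Max_ge finite_atLeastAtMost finite_imageI)
  then show ?thesis by simp
qed

lemma T_conv: assumes "x \<in> D" "u \<in> D" "0 \<le> s" "s \<le> 1" "j \<in> {1..m}"
  shows "T x j (x + s *\<^sub>R (u - x)) \<le> s * T x j u"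
proof -
  have e: "x + s *\<^sub>R (u - x) = (1 - s) *\<^sub>R x + s *\<^sub>R u" by (simp add: algebra_simps)
  have "hr j (x + s *\<^sub>R (u - x)) \<le> (1 - s) * hr j x + s * hr j u"
    unfolding e using convex_onD[OF hr_convex[OF assms(5)]] assms by auto
  then show ?thesis unfolding T_def by (simp add: algebra_simps inner_scaleR_right)
qed

lemma q_conv: assumes "x \<in> D" "u \<in> D" "0 \<le> s" "s \<le> 1"
  shows "q x (x + s *\<^sub>R (u - x)) \<le> s * q x u"
proof -
  have "\<forall>j\<in>{1..m}. T x j (x + s *\<^sub>R (u - x)) \<le> s * q x u"
  proof
    fix j assume j: "j \<in> {1..m}"
    have "T x j (x + s *\<^sub>R (u - x)) \<le> s * T x j u" by (rule T_conv[OF assms j])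
    also have "\<dots> \<le> s * q x u" by (rule mult_left_mono[OF q_ge[OF j] assms(3)])
    finally show "T x j (x + s *\<^sub>R (u - x)) \<le> s * q x u" .
  qed
  then show ?thesis unfolding q_def using m_pos by (subst Max_le_iff) auto
qed

lemma exists_min: assumes x: "x \<in> D" shows "\<exists>p\<in>D. \<forall>u\<in>D. f x p \<le> f x u"
proof -
  have j1: "(1::nat) \<in> {1..m}" using m_pos by auto
  define S1 where "S1 = D \<inter> cball x 1"
  have "compact S1" unfolding S1_def using dom_closed by (intro closed_Int_compact) auto
  moreover have "S1 \<noteq> {}" using x unfolding S1_def by auto
  moreover have "continuous_on S1 (T x 1)" unfolding S1_def
    using T_cont[OF j1] by (rule continuous_on_subset) auto
  ultimately obtain w0 where "w0 \<in> S1" "\<forall>w\<in>S1. T x 1 w0 \<le> T x 1 w"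
    using continuous_attains_inf by blast
  then obtain M where M: "M \<ge> 0" "\<And>w. w \<in> S1 \<Longrightarrow> T x 1 w \<ge> - M"
    by (intro that[of "max 0 (- T x 1 w0)"]) force+
  have far: "q x u \<ge> - M * norm (u - x)" if u: "u \<in> D" "norm (u - x) \<ge> 1" for u
  proof -
    define r where "r = norm (u - x)"
    have r: "r \<ge> 1" using u r_def by auto
    define w where "w = x + (1 / r) *\<^sub>R (u - x)"
    have "w \<in> D" unfolding w_def using x u(1) r by (intro D_seg) auto
    moreover have "norm (w - x) = (1 / r) * r" unfolding w_def r_def by simp
    then have "norm (w - x) = 1" using r by simp
    ultimately have "w \<in> S1" unfolding S1_def by (simp add: dist_norm norm_minus_commute)
    then have "- M \<le> T x 1 w" using M by auto
    also have "\<dots> \<le> (1 / r) * T x 1 u" unfolding w_def by (rule T_conv[OF x u(1) _ _ j1]) (use r in auto)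
    finally have "- M * r \<le> T x 1 u" using r by (simp add: field_simps)
    then show ?thesis using q_ge[OF j1, of x u] r_def by simp
  qed
  define R where "R = max 1 (2 * \<alpha> * M + 1)"
  have farf: "f x u > 0" if u: "u \<in> D" "norm (u - x) > R" for u
  proof -
    define r where "r = norm (u - x)"
    have r: "r > R" "R \<ge> 1" "R \<ge> 2 * \<alpha> * M + 1" using u r_def R_def by auto
    have "q x u \<ge> - M * r" using far[OF u(1)] r r_def by auto
    moreover have "r / (2 * \<alpha>) > M" using r alpha_pos by (simp add: field_simps)
    then have "r * (r / (2 * \<alpha>)) > r * M" using r by (intro mult_strict_left_mono) auto
    then have "r * r / (2 * \<alpha>) > M * r" by (simp add: algebra_simps)
    ultimately show ?thesis unfolding f_def r_def[symmetric] by (simp add: power2_eq_square)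
  qed
  define K where "K = D \<inter> cball x R"
  have "compact K" unfolding K_def using dom_closed by (intro closed_Int_compact) auto
  moreover have "K \<noteq> {}" using x unfolding K_def R_def by auto
  moreover have "continuous_on K (f x)" unfolding K_def
    using f_cont by (rule continuous_on_subset) auto
  ultimately obtain p where p: "p \<in> K" "\<forall>u\<in>K. f x p \<le> f x u"
    using continuous_attains_inf by blast
  have "x \<in> K" using x unfolding K_def R_def by auto
  then have fp: "f x p \<le> 0" using p q_self unfolding f_def by force
  have "\<forall>u\<in>D. f x p \<le> f x u"
  proof
    fix u assume u: "u \<in> D"
    show "f x p \<le> f x u"
    proof (cases "norm (u - x) \<le> R")
      case True then have "u \<in> K" using u unfolding K_def by (simp add: dist_norm norm_minus_commute)
      then show ?thesis using p by auto
    next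
      case False then show ?thesis using farf[OF u] fp by auto
    qed
  qed
  then show ?thesis using p K_def by auto
qed

abbreviation "P x \<equiv> p_alpha gradG H m \<alpha> x"

lemma phi_in: "x \<in> D \<Longrightarrow> u \<in> D \<Longrightarrow>
   psi gradG H m x u + ereal (norm (u - x) ^ 2 / (2 * \<alpha>)) = ereal (f x u)"
  using psi_in unfolding f_def by simp

lemma phi_out: "x \<in> D \<Longrightarrow> u \<notin> D \<Longrightarrow>
   psi gradG H m x u + ereal (norm (u - x) ^ 2 / (2 * \<alpha>)) = \<infinity>"
  using psi_out by simp

lemma P_prop: assumes x: "x \<in> D" shows "P x \<in> D" "\<forall>u\<in>D. f x (P x) \<le> f x u"
proof -
  let ?phi = "\<lambda>u. psi gradG H m x u + ereal (norm (u - x) ^ 2 / (2 * \<alpha>))"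
  obtain p where p: "p \<in> D" "\<forall>u\<in>D. f x p \<le> f x u" using exists_min[OF x] by blast
  have "is_arg_min ?phi (\<lambda>_. True) p"
    unfolding is_arg_min_def
  proof (clarsimp)
    fix y assume y: "?phi y < ?phi p"
    show False
    proof (cases "y \<in> D")
      case True
      have "ereal (f x y) < ereal (f x p)" using y phi_in[OF x True] phi_in[OF x p(1)] by simp
      have "f x p \<le> f x y" using p(2) True by blast
      then show False using \<open>ereal (f x y) < ereal (f x p)\<close> by simp
    next
      case False then show False using y phi_out[OF x] by simp
    qed
  qed
  then have a: "is_arg_min ?phi (\<lambda>_. True) (P x)"
    unfolding p_alpha_def arg_min_def by (rule someI)
  then have le: "?phi (P x) \<le> ?phi u" for u using a unfolding is_arg_min_def using not_less by blast
  have lex: "?phi (P x) \<le> ?phi x" using le[of x] .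
  show PD: "P x \<in> D"
  proof (rule ccontr)
    assume "P x \<notin> D"
    then have "?phi (P x) = \<infinity>" by (rule phi_out[OF x])
    moreover have "?phi x = ereal (f x x)" by (rule phi_in[OF x x])
    ultimately show False using lex by simp
  qed
  show "\<forall>u\<in>D. f x (P x) \<le> f x u"
  proof
    fix u assume u: "u \<in> D"
    have "ereal (f x (P x)) \<le> ereal (f x u)" using le[of u] phi_in[OF x u] phi_in[OF x PD] by simp
    then show "f x (P x) \<le> f x u" by simp
  qed
qed

lemma theta_eq: assumes "x \<in> D" shows "theta_alpha gradG H m \<alpha> x = ereal (f x (P x))"
  unfolding theta_alpha_def by (rule phi_in[OF assms P_prop(1)[OF assms]])

lemma q_bound: assumes x: "x \<in> D" and s: "0 \<le> s" "s < 1"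
  shows "q x (P x) \<le> - ((1 + s) * norm (P x - x) ^ 2 / (2 * \<alpha>))"
proof -
  define p where "p = P x"
  define n where "n = norm (p - x) ^ 2"
  have pD: "p \<in> D" using P_prop[OF x] p_def by auto
  have uD: "x + s *\<^sub>R (p - x) \<in> D"
    using x pD s by (intro D_seg) auto
  have "f x p \<le> f x (x + s *\<^sub>R (p - x))" using P_prop[OF x] uD p_def by auto
  also have "\<dots> = q x (x + s *\<^sub>R (p - x)) + s * s * n / (2 * \<alpha>)"
    unfolding f_def n_def using s by (simp add: power_mult_distrib power2_eq_square)
  also have "\<dots> \<le> s * q x p + s * s * n / (2 * \<alpha>)"
    using q_conv[OF x pD s(1)] s by simp
  finally have "q x p + n / (2 * \<alpha>) \<le> s * q x p + s * s * n / (2 * \<alpha>)" unfolding f_def n_def .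
  moreover define c where "c = n / (2 * \<alpha>)"
  ultimately have A: "q x p + c \<le> s * q x p + s * s * c" by simp
  have "(1 - s) * q x p \<le> (1 - s) * (- ((1 + s) * c))" using A by (simp add: algebra_simps)
  then have "q x p \<le> - ((1 + s) * c)" using s mult_le_cancel_left_pos[of "1 - s" "q x p" "- ((1 + s) * c)"] by simp
  then show ?thesis unfolding p_def n_def c_def by simp
qed

end

theorem mainTheorem6:
  fixes G :: "nat \<Rightarrow> 'a::euclidean_space \<Rightarrow> real"
    and gradG :: "nat \<Rightarrow> 'a \<Rightarrow> 'a"
    and H :: "nat \<Rightarrow> 'a \<Rightarrow> ereal"
    and m :: nat and L :: "nat \<Rightarrow> real"
    and \<alpha> \<gamma> \<tau>1 \<tau>2 :: real
    and x :: "nat \<Rightarrow> 'a" and jstar :: "nat \<Rightarrow> nat"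
  assumes m_pos: "m \<ge> 1"
    and G_diff: "\<And>j y. j \<in> {1..m} \<Longrightarrow> (G j has_derivative (\<lambda>h. gradG j y \<bullet> h)) (at y)"
    and G_C1: "\<And>j. j \<in> {1..m} \<Longrightarrow> continuous_on UNIV (gradG j)"
    and G_convex: "\<And>j. j \<in> {1..m} \<Longrightarrow> convex_on UNIV (G j)"
    and H_prop: "\<And>j. j \<in> {1..m} \<Longrightarrow> proper_convex_cont (H j)"
    and dom_ne: "domF G H m \<noteq> {}"
    and dom_closed: "closed (domF G H m)"
    and alpha_pos: "\<alpha> > 0"
    and gamma: "0 < \<gamma>" "\<gamma> < 2 / \<alpha>"
    and tau: "0 < \<tau>1" "\<tau>1 < \<tau>2" "\<tau>2 < 1"
    and x0: "x 0 \<in> domF G H m"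
    and no_stop: "\<And>k. theta_alpha gradG H m \<alpha> (x k) \<noteq> 0"
    and jstar_mem: "\<And>k. jstar k \<in> {1..m}"
    and jstar_max: "\<And>k i. i \<in> {1..m} \<Longrightarrow>
           gradG i (x k) \<bullet> (p_alpha gradG H m \<alpha> (x k) - x k)
           \<le> gradG (jstar k) (x k) \<bullet> (p_alpha gradG H m \<alpha> (x k) - x k)"
    and step: "\<And>k. \<exists>tk. mpg_linesearch G gradG H m \<gamma> \<tau>1 \<tau>2 (x k)
                         (p_alpha gradG H m \<alpha> (x k) - x k) (jstar k) tk \<and>
                       x (Suc k) = x k + tk *\<^sub>R (p_alpha gradG H m \<alpha> (x k) - x k)"
    and L_pos: "\<And>j. j \<in> {1..m} \<Longrightarrow> L j > 0"
    and lipschitz: "\<And>j y z. j \<in> {1..m} \<Longrightarrow> norm (gradG j y - gradG j z) \<le> L j * norm (y - z)"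
  shows "\<exists>c>0. \<forall>k. theta_alpha gradG H m \<alpha> (x k)
                 \<ge> ereal c * (Fobj G H (jstar k) (x (Suc k)) - Fobj G H (jstar k) (x k))"
proof -
  interpret mpg G gradG H m \<alpha>
    using m_pos H_prop dom_closed alpha_pos by unfold_locales auto
  define Lmax where "Lmax = Max (L ` {1..m})"
  have Lj: "L j \<le> Lmax" if "j \<in> {1..m}" for j unfolding Lmax_def using that by (intro Max_ge) auto
  have Lmax_pos: "Lmax > 0" using Lj[of 1] L_pos[of 1] m_pos by auto
  define b where "b = \<gamma> / Lmax"
  have b_pos: "b > 0" unfolding b_def using gamma Lmax_pos by simp
  have Lb: "Lmax * b = \<gamma>" unfolding b_def using Lmax_pos by simp
  define tmin where "tmin = \<tau>1 * \<tau>1 * min 1 b"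
  have tmin_pos: "tmin > 0" unfolding tmin_def using tau b_pos by simp
  have arm: "armijo G gradG \<gamma> j y d r" if j: "j \<in> {1..m}" and r: "0 < r" "r \<le> b" for j y d r
  proof -
    have "G j (y + r *\<^sub>R d) \<le> G j y + r * (gradG j y \<bullet> d) + L j * r^2 / 2 * norm d ^ 2"
      by (rule descent[OF G_diff[OF j] lipschitz[OF j]]) (use r L_pos[OF j] in auto)
    moreover have "L j * r \<le> \<gamma>"
    proof -
      have "L j * r \<le> Lmax * b" using Lj[OF j] r L_pos[OF j] Lmax_pos by (intro mult_mono) auto
      then show ?thesis using Lb by simp
    qed
    then have "L j * r * (r * norm d ^ 2 / 2) \<le> \<gamma> * (r * norm d ^ 2 / 2)"
      using r by (intro mult_right_mono) auto
    then have "L j * r^2 / 2 * norm d ^ 2 \<le> r * (\<gamma> / 2) * norm d ^ 2"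
      by (simp add: power2_eq_square algebra_simps)
    ultimately show ?thesis unfolding armijo_def by simp
  qed
  have tstep: "\<exists>tk. 0 < tk \<and> tk \<le> 1 \<and> tmin \<le> tk \<and>
      armijo G gradG \<gamma> (jstar k) (x k) (P (x k) - x k) tk \<and>
      x (Suc k) = x k + tk *\<^sub>R (P (x k) - x k)" for k
  proof -
    let ?d = "P (x k) - x k"
    obtain tk where ls: "mpg_linesearch G gradG H m \<gamma> \<tau>1 \<tau>2 (x k) ?d (jstar k) tk"
      and xs: "x (Suc k) = x k + tk *\<^sub>R ?d" using step[of k] by blast
    obtain t where bt1: "bt (armijo G gradG \<gamma> (jstar k) (x k) ?d) \<tau>1 \<tau>2 1 t"
      and cases: "((\<forall>i\<in>{1..m}. Fobj G H i (x k + t *\<^sub>R ?d) \<le> Fobj G H i (x k)) \<and> tk = t) \<or>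
        (\<exists>s. \<tau>1 * t \<le> s \<and> s \<le> \<tau>2 * t \<and>
            bt (\<lambda>r. \<forall>i\<in>{1..m}. armijo G gradG \<gamma> i (x k) ?d r) \<tau>1 \<tau>2 s tk)"
      using ls unfolding mpg_linesearch_def by blast
    have t1: "armijo G gradG \<gamma> (jstar k) (x k) ?d t \<and> t \<le> 1 \<and> min 1 (\<tau>1 * b) \<le> t"
      by (rule bt_bound[OF bt1]) (use tau b_pos arm jstar_mem in auto)
    have mt: "tmin \<le> min 1 (\<tau>1 * b)"
    proof -
      have "\<tau>1 * \<tau>1 * min 1 b \<le> 1 * 1 * min 1 b" using tau b_pos
        by (intro mult_right_mono mult_mono) auto
      moreover have "\<tau>1 * \<tau>1 * min 1 b \<le> \<tau>1 * 1 * b" using tau b_pos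
        by (intro mult_mono) auto
      ultimately show ?thesis unfolding tmin_def by simp
    qed
    show ?thesis
    proof (cases "tk = t \<and> (\<forall>i\<in>{1..m}. Fobj G H i (x k + t *\<^sub>R ?d) \<le> Fobj G H i (x k))")
      case True
      have "0 < t" "tmin \<le> t" using t1 mt tmin_pos by linarith+
      then show ?thesis using t1 True xs by (intro exI[of _ tk]) auto
    next
      case False
      then obtain s where s: "\<tau>1 * t \<le> s" "s \<le> \<tau>2 * t"
        and bt2: "bt (\<lambda>r. \<forall>i\<in>{1..m}. armijo G gradG \<gamma> i (x k) ?d r) \<tau>1 \<tau>2 s tk"
        using cases by blast
      have tpos: "t > 0" using t1 mt tmin_pos by linarith
      have "\<tau>1 * t > 0" using tau tpos by simp
      then have spos: "s > 0" using s(1) by linarith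
      have t2: "(\<forall>i\<in>{1..m}. armijo G gradG \<gamma> i (x k) ?d tk) \<and> tk \<le> s \<and> min s (\<tau>1 * b) \<le> tk"
        by (rule bt_bound[OF bt2]) (use tau b_pos arm spos in auto)
      have "\<tau>2 * t \<le> t" using tau tpos by (simp add: mult_le_cancel_right1)
      then have "s \<le> t" using s(2) by linarith
      moreover have "tmin \<le> min s (\<tau>1 * b)"
      proof -
        have m1: "\<tau>1 * min 1 b \<le> 1 * 1" using tau b_pos by (intro mult_mono) auto
        have m2: "\<tau>1 * min 1 b \<le> \<tau>1 * b" using tau b_pos by (intro mult_left_mono) auto
        have "\<tau>1 * min 1 b \<le> min 1 (\<tau>1 * b)" using m1 m2 by simp
        then have "\<tau>1 * (\<tau>1 * min 1 b) \<le> \<tau>1 * min 1 (\<tau>1 * b)" using tau by (intro mult_left_mono) auto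
        then have tm1: "tmin \<le> \<tau>1 * min 1 (\<tau>1 * b)" unfolding tmin_def by (simp add: mult.assoc)
        have "\<tau>1 * min 1 (\<tau>1 * b) \<le> 1 * (\<tau>1 * b)" using tau b_pos by (intro mult_mono) auto
        then have tm2: "tmin \<le> \<tau>1 * b" using tm1 by simp
        have "\<tau>1 * min 1 (\<tau>1 * b) \<le> \<tau>1 * t" using t1 tau by (intro mult_left_mono) auto
        then have "tmin \<le> s" using s tm1 by linarith
        then show ?thesis using tm2 by simp
      qed
      ultimately have tt: "tmin \<le> tk" "tk \<le> 1" using t1 t2 by auto
      have "armijo G gradG \<gamma> (jstar k) (x k) ?d tk" using t2 jstar_mem[of k] by blast
      then show ?thesis using tt tmin_pos xs by (intro exI[of _ tk]) auto
    qed
  qed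
  have inD: "x k \<in> D" for k
  proof (induction k)
    case 0 then show ?case using x0 by simp
  next
    case (Suc k)
    obtain tk where "0 < tk" "tk \<le> 1" "x (Suc k) = x k + tk *\<^sub>R (P (x k) - x k)"
      using tstep[of k] by blast
    then show ?case using D_seg[OF Suc P_prop(1)[OF Suc]] by simp
  qed
  define \<kappa> where "\<kappa> = 1 - \<alpha> * \<gamma> / 2"
  have ag: "\<alpha> * \<gamma> < 2" using gamma alpha_pos by (simp add: field_simps)
  have kpos: "\<kappa> > 0" unfolding \<kappa>_def using ag by simp
  define c where "c = 1 / (tmin * \<kappa>)"
  have cpos: "c > 0" unfolding c_def using tmin_pos kpos by simp
  show ?thesis
  proof (intro exI[of _ c] conjI allI cpos)
    fix k
    define y where "y = x k"
    define p where "p = P y"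
    define d where "d = p - y"
    define n where "n = norm d ^ 2"
    define w where "w = n / (2 * \<alpha>)"
    define qv where "qv = q y p"
    define j where "j = jstar k"
    have yD: "y \<in> D" using inD y_def by simp
    have pD: "p \<in> D" using P_prop(1)[OF yD] p_def by simp
    have j: "j \<in> {1..m}" using jstar_mem j_def by simp
    obtain t where t: "0 < t" "t \<le> 1" "tmin \<le> t"
      and ar: "armijo G gradG \<gamma> j y d t" and xs: "x (Suc k) = y + t *\<^sub>R d"
      using tstep[of k] unfolding y_def[symmetric] p_def[symmetric] d_def[symmetric] j_def[symmetric] by blast
    have y1D: "y + t *\<^sub>R d \<in> D" unfolding d_def using D_seg[OF yD pD] t by simp
    have th: "theta_alpha gradG H m \<alpha> (x k) = ereal (qv + w)"
      unfolding y_def[symmetric] using theta_eq[OF yD] unfolding f_def qv_def w_def n_def d_def p_def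
      by simp
    have F1: "Fobj G H j (x (Suc k)) = ereal (G j (y + t *\<^sub>R d) + hr j (y + t *\<^sub>R d))"
      unfolding xs Fobj_def using H_fin[OF j y1D] by simp
    have F0: "Fobj G H j (x k) = ereal (G j y + hr j y)"
      unfolding y_def[symmetric] Fobj_def using H_fin[OF j yD] by simp
    have G1: "G j (y + t *\<^sub>R d) \<le> G j y + t * (gradG j y \<bullet> d) + t * (\<gamma> / 2) * n"
      using ar unfolding armijo_def n_def by simp
    have H1: "hr j (y + t *\<^sub>R d) \<le> (1 - t) * hr j y + t * hr j p"
    proof -
      have e: "y + t *\<^sub>R d = (1 - t) *\<^sub>R y + t *\<^sub>R p" unfolding d_def by (simp add: algebra_simps)
      show ?thesis unfolding e using convex_onD[OF hr_convex[OF j]] yD pD t by simp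
    qed
    have Tq: "gradG j y \<bullet> d + hr j p - hr j y \<le> qv"
      using q_ge[OF j, of y p] unfolding T_def qv_def d_def by simp
    define \<Delta> where "\<Delta> = G j (y + t *\<^sub>R d) + hr j (y + t *\<^sub>R d) - (G j y + hr j y)"
    have D1: "\<Delta> \<le> t * (qv + \<gamma> / 2 * n)"
    proof -
      have "\<Delta> \<le> t * (gradG j y \<bullet> d + hr j p - hr j y) + t * (\<gamma> / 2) * n"
        unfolding \<Delta>_def using G1 H1 by (simp add: algebra_simps)
      also have "\<dots> \<le> t * qv + t * (\<gamma> / 2) * n" using Tq t by simp
      finally show ?thesis by (simp add: algebra_simps)
    qed
    define a where "a = \<alpha> * \<gamma>"
    have a: "0 < a" "a < 2" unfolding a_def using ag alpha_pos gamma by auto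
    have wpos: "w \<ge> 0" unfolding w_def n_def using alpha_pos by simp
    have qb: "qv \<le> - ((1 + a / 2) * w)"
    proof -
      have "qv \<le> - ((1 + a / 2) * norm (P y - y) ^ 2 / (2 * \<alpha>))"
        unfolding qv_def p_def by (rule q_bound[OF yD]) (use a in auto)
      then show ?thesis unfolding w_def n_def d_def p_def by simp
    qed
    have gn: "\<gamma> / 2 * n = a * w" unfolding a_def w_def using alpha_pos by (simp add: field_simps)
    have key: "qv + \<gamma> / 2 * n \<le> \<kappa> * (qv + w)"
    proof -
      have h1: "(a / 2) * qv \<le> (a / 2) * (- ((1 + a / 2) * w))"
        using qb a by (intro mult_left_mono) auto
      have h2: "(1 - 3 * a / 2) * w - (a / 2) * (- ((1 + a / 2) * w)) = (1 - a / 2)^2 * w"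
        by (simp add: algebra_simps power2_eq_square)
      have h3: "(1 - a / 2)^2 * w \<ge> 0" using wpos by simp
      have "\<kappa> * (qv + w) - (qv + a * w) = (1 - 3 * a / 2) * w - (a / 2) * qv"
        unfolding \<kappa>_def a_def[symmetric] by (simp add: algebra_simps)
      then show ?thesis using h1 h2 h3 gn by linarith
    qed
    have "(a / 2) * w \<ge> 0" using a wpos by simp
    moreover have "(1 + a / 2) * w = w + (a / 2) * w" by (simp add: algebra_simps)
    ultimately have thr: "qv + w \<le> 0" using qb by linarith
    have "t * (qv + \<gamma> / 2 * n) \<le> t * (\<kappa> * (qv + w))" using key t by (intro mult_left_mono) auto
    then have "\<Delta> \<le> t * (\<kappa> * (qv + w))" using D1 by linarith
    also have "\<dots> \<le> tmin * (\<kappa> * (qv + w))"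
      using t thr kpos by (intro mult_right_mono_neg) (auto simp: mult_nonneg_nonpos)
    finally have "c * \<Delta> \<le> qv + w"
      unfolding c_def using tmin_pos kpos by (simp add: field_simps)
    then show "theta_alpha gradG H m \<alpha> (x k) \<ge> ereal c * (Fobj G H (jstar k) (x (Suc k)) - Fobj G H (jstar k) (x k))"
      unfolding th j_def[symmetric] F1 F0 \<Delta>_def by simp
  qed
qed

end
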